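(* Let $R$ be a relation with $n$ tuples, and let $\mathcal{R}$ be the output of the following recursive procedure $\textsc{Partition}(R,\mathcal{S})$ run with $\mathcal{S}=\mathcal{P}(\mathrm{vars}(R))$ ordered by increasing cardinality: if $\mathcal{S}=\emptyset$, return $\{R\}$; otherwise let $U$ be the first set in $\mathcal{S}$, for each $i\in\{1,\dots,\lceil\log n\rceil\}$ let $R^i$ be the set of tuples $t\in R$ such that $\deg_R(U=\pi_U t)\in[2^{i-1},2^i]$, and return $\bigcup_i \textsc{Partition}(R^i,\mathcal{S}\setminus\{U\})$. Then (1) $|\mathcal{R}|\le \log^{|\mathcal{P}(\mathrm{vars}(R))|} n$; (2) every instance $T\in\mathcal{R}$ satisfies a constraint set $\sigma_T$ with $\sigma_T(\emptyset)=n$ and $\sigma_T(\mathrm{vars}(R))=1$.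
   Context: For a relation $R$ and $X,Y\subseteq\mathrm{vars}(R)$ and a tuple $\mathbf{y}$ over $Y$, $\deg_R(X\mid Y=\mathbf{y})=|\pi_X(\sigma_{Y=\mathbf{y}}R)|$ and $\deg_R(X\mid Y)=\max_{\mathbf{y}}\deg_R(X\mid Y=\mathbf{y})$; the shorthand $\deg_R(U=u)$ means $\deg_R(\mathrm{vars}(R)\mid U=u)$, the number of tuples of $R$ with $U$-value $u$. In each recursive call degrees are computed in the current (sub)relation. A constraint set for $R$ is a function $\sigma:\mathcal{P}(\mathrm{vars}(R))\to\mathbb{R}_{\ge0}$, and $R$ satisfies $\sigma$ if $\deg_R(Y\mid X)\le 2\sigma(X)/\sigma(Y)$ for all $X\subseteq Y\subseteq\mathrm{vars}(R)$. Empty parts are discarded. *)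

theory Defs
  imports Complex_Main "HOL-Library.FuncSet"
begin

text \<open>Tuples over the variable set V are functions 'v => 'a that are extensional on V
  (value undefined outside V). A relation is a finite set of such tuples.
  Projection onto X is restrict t X.\<close>

definition deg_at :: "('v \<Rightarrow> 'a) set \<Rightarrow> 'v set \<Rightarrow> 'v set \<Rightarrow> ('v \<Rightarrow> 'a) \<Rightarrow> nat" where
  "deg_at R X Y y = card ((\<lambda>t. restrict t X) ` {t \<in> R. restrict t Y = y})"

definition deg :: "('v \<Rightarrow> 'a) set \<Rightarrow> 'v set \<Rightarrow> 'v set \<Rightarrow> nat" where
  "deg R X Y = Max ({deg_at R X Y (restrict t Y) | t. t \<in> R} \<union> {0})"

definition deg_val :: "'v set \<Rightarrow> ('v \<Rightarrow> 'a) set \<Rightarrow> 'v set \<Rightarrow> ('v \<Rightarrow> 'a) \<Rightarrow> nat" where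
  "deg_val V R U u = deg_at R V U u"

definition part_i :: "'v set \<Rightarrow> ('v \<Rightarrow> 'a) set \<Rightarrow> 'v set \<Rightarrow> nat \<Rightarrow> ('v \<Rightarrow> 'a) set" where
  "part_i V R U i = {t \<in> R. 2 ^ (i - 1) \<le> deg_val V R U (restrict t U) \<and> deg_val V R U (restrict t U) \<le> 2 ^ i}"

text \<open>PARTITION(R, S). The parameter n is the number of tuples of the original relation,
  used for the range i in {1..ceil(log n)}. Empty parts are discarded.\<close>
fun partition_rel :: "'v set \<Rightarrow> nat \<Rightarrow> 'v set list \<Rightarrow> ('v \<Rightarrow> 'a) set \<Rightarrow> ('v \<Rightarrow> 'a) set set" where
  "partition_rel V n [] R = (if R = {} then {} else {R})"
| "partition_rel V n (U # Us) R =
     (\<Union>i \<in> {1..nat \<lceil>log 2 (real n)\<rceil>}. partition_rel V n Us (part_i V R U i))"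

definition constraint_set :: "'v set \<Rightarrow> ('v set \<Rightarrow> real) \<Rightarrow> bool" where
  "constraint_set V \<sigma> \<longleftrightarrow> (\<forall>X. X \<subseteq> V \<longrightarrow> \<sigma> X \<ge> 0)"

text \<open>T satisfies sigma: deg_T(Y | X) <= 2 sigma(X) / sigma(Y) for all X <= Y <= V,
  written multiplicatively (so that sigma(Y) = 0 imposes no constraint, i.e. the bound is +infinity).\<close>
definition satisfies :: "('v \<Rightarrow> 'a) set \<Rightarrow> 'v set \<Rightarrow> ('v set \<Rightarrow> real) \<Rightarrow> bool" where
  "satisfies T V \<sigma> \<longleftrightarrow>
     (\<forall>X Y. X \<subseteq> Y \<and> Y \<subseteq> V \<longrightarrow> real (deg T Y X) * \<sigma> Y \<le> 2 * \<sigma> X)"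

end

theory Submission
  imports Defs
begin


lemma aux16: "(2::nat) \<le> m \<Longrightarrow> 16 * 2^m \<le> (3::nat)^(m+2)"
proof (induction m rule: dec_induct)
  case base then show ?case by simp
next
  case (step m) then show ?case by simp
qed

lemma aux_exp: fixes f m :: nat assumes "f \<ge> 1" "m \<le> f"
  shows "real (f+1)^m \<le> 3 * real f ^ m"
proof -
  have fp: "real f > 0" using assms by simp
  have "real (f+1) = real f * (1 + 1/real f)" using fp by (simp add: field_simps)
  hence e: "real (f+1)^m = real f^m * (1 + 1/real f)^m" by (simp add: power_mult_distrib)
  have "(1 + 1/real f)^m \<le> exp (1/real f)^m"
    by (rule power_mono) (auto simp: exp_ge_add_one_self fp intro: add_nonneg_nonneg)
  also have "\<dots> = exp (real m * (1/real f))" by (rule exp_of_nat_mult[symmetric])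
  also have "\<dots> \<le> exp 1" using assms fp by (simp add: field_simps)
  also have "\<dots> \<le> 3" by (rule exp_le)
  finally have "(1 + 1/real f)^m \<le> 3" .
  with e show ?thesis using fp by (simp add: mult.commute mult_left_mono)
qed

lemma log3: "3/2 \<le> log 2 (3::real)"
proof -
  have "(2::real) powr (3/2) * 2 powr (3/2) = 2 powr 3" by (simp add: powr_add[symmetric])
  also have "\<dots> = 8" by simp
  finally have sq: "(2::real) powr (3/2) * 2 powr (3/2) = 8" .
  have "(2::real) powr (3/2) \<le> 3"
  proof (rule ccontr)
    assume "\<not> ?thesis"
    hence "(2::real) powr (3/2) * 2 powr (3/2) > 3 * 3" by (intro mult_strict_mono) auto
    with sq show False by simp
  qed
  thus ?thesis by (subst le_log_iff) auto
qed

lemma arith_final: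
  fixes N n k :: nat
  assumes n2: "2 \<le> n" and k: "k = 2 \<or> k = 4 \<or> 8 \<le> k"
  and b1: "N \<le> nat \<lceil>log 2 (real n)\<rceil> ^ (k-2)" and b2: "N \<le> n * 2^(k-2)" and b3: "N \<le> 2^n"
  shows "real N \<le> log 2 (real n) ^ k"
proof -
  obtain f where f1: "2^f \<le> n" and f2: "n < 2^(f+1)" using ex_power_ivl1[of 2 n] n2 by auto
  define L where "L = log 2 (real n)"
  have hL1: "real f \<le> L" unfolding L_def using f1 n2
    by (subst le_log_iff) (auto simp: powr_realpow)
  have f2r: "real n < 2^(f+1)" using f2 by (metis of_nat_less_iff of_nat_numeral of_nat_power)
  have hL2: "L < real f + 1" unfolding L_def using f2r n2
    by (subst log_less_iff) (auto simp: powr_add powr_realpow)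
  have hc: "nat \<lceil>L\<rceil> \<le> f + 1" using hL2 by linarith
  have f0: "f \<ge> 1" using f2 n2 by (cases f) auto
  have b1': "N \<le> (f+1)^(k-2)" using b1 hc unfolding L_def[symmetric]
    by (meson le_trans power_mono zero_le)
  have "real N \<le> L^k"
  proof (cases "f = 1")
    case True
    then have "n = 2 \<or> n = 3" using f2 n2 by auto
    then show ?thesis
    proof
      assume n: "n = 2"
      then have "L = 1" unfolding L_def by simp
      with b1 n show ?thesis by simp
    next
      assume n: "n = 3"
      then have L3: "3/2 \<le> L" unfolding L_def using log3 by simp
      from k show ?thesis
      proof (elim disjE)
        assume k2: "k = 2"
        have "1 \<le> L^2" using L3 by (intro one_le_power) auto
        moreover have "real N \<le> 1" using b1 k2 by simp
        ultimately have "real N \<le> L^2" by linarith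
        then show ?thesis using k2 by simp
      next
        assume k4: "k = 4"
        have "N \<le> 4" using b1' True k4 by (simp add: power2_eq_square)
        moreover have "(3/2::real)^4 \<le> L^4" using L3 by (intro power_mono) auto
        moreover have "(4::real) \<le> (3/2)^4" by (simp add: eval_nat_numeral)
        ultimately show ?thesis using k4 by simp
      next
        assume k8: "8 \<le> k"
        have "N \<le> 8" using b3 n by simp
        moreover have "(3/2::real)^8 \<le> L^8" using L3 by (intro power_mono) auto
        moreover have "L^8 \<le> L^k" using L3 k8 by (intro power_increasing) auto
        moreover have "(8::real) \<le> (3/2)^8" by (simp add: eval_nat_numeral)
        ultimately show ?thesis by simp
      qed
    qed
  next
    case False
    hence f2': "f \<ge> 2" using f0 by simp
    have "real N \<le> real f ^ k"
    proof (cases "k = 2")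
      case True
      have "1 \<le> f^2" using f2' by (simp add: power2_eq_square)
      hence "N \<le> f^2" using b1' True by simp
      then show ?thesis using True by (metis of_nat_le_iff of_nat_power)
    next
      case kn2: False
      show ?thesis
      proof (cases "k - 2 \<le> f")
        case True
        have "real N \<le> real (f+1)^(k-2)" using b1' by (metis of_nat_le_iff of_nat_power)
        also have "\<dots> \<le> 3 * real f^(k-2)" using aux_exp[OF f0 True] .
        also have "\<dots> \<le> real f^2 * real f^(k-2)"
        proof (rule mult_right_mono)
          have "(2::real)^2 \<le> real f^2" using f2' by (intro power_mono) auto
          then show "3 \<le> real f^2" by simp
        qed simp
        also have "\<dots> = real f ^ k"
        proof -
          have kk: "2 + (k-2) = k" using k by auto
          show ?thesis by (metis kk power_add)
        qed
        finally show ?thesis .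
      next
        case False
        hence k8: "8 \<le> k" using k f2' by auto
        show ?thesis
        proof (cases "f = 2")
          case True
          have "n \<le> 7" using f2 True by simp
          hence "N \<le> 2^7" using b3 by (meson le_trans power_increasing_iff one_less_numeral_iff semiring_norm(76))
          also have "(2::nat)^7 \<le> 2^k" using k8 by (intro power_increasing) auto
          finally show ?thesis using True by (metis of_nat_le_iff of_nat_numeral of_nat_power)
        next
          case False
          have "N < 2^(f+1) * 2^(k-2)" using b2 f2 by (meson le_less_trans mult_less_cancel2 zero_less_numeral zero_less_power)
          show ?thesis
          proof (cases "f = 3")
            case True
            have "N < 16 * 2^(k-2)" using \<open>N < _\<close> True by simp
            also have "\<dots> \<le> 3^(k-2+2)" using k8 by (intro aux16) auto
            also have "k - 2 + 2 = k" using k8 by simp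
            finally have "N \<le> 3^k" by simp
            then show ?thesis using True by (metis of_nat_le_iff of_nat_numeral of_nat_power)
          next
            case False
            hence f4: "f \<ge> 4" using f2' \<open>f \<noteq> 2\<close> by simp
            have "N < 2^(f+1+(k-2))" using \<open>N < _\<close> by (simp add: power_add)
            also have "(2::nat)^(f+1+(k-2)) \<le> 2^(2*k)" using \<open>\<not> k - 2 \<le> f\<close> by (intro power_increasing) auto
            also have "\<dots> = 4^k" by (simp add: power_mult)
            also have "\<dots> \<le> f^k" using f4 by (intro power_mono) auto
            finally show ?thesis by (metis less_imp_le of_nat_le_iff of_nat_power)
          qed
        qed
      qed
    qed
    also have "\<dots> \<le> L^k" using hL1 by (intro power_mono) auto
    finally show ?thesis .
  qed
  thus ?thesis unfolding L_def .
qed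


lemma part_empty: "partition_rel V n Ss {} = {}"
  by (induction Ss) (auto simp: part_i_def)

lemma part_fin: "finite (partition_rel V n Ss R)"
  by (induction Ss arbitrary: R) auto

lemma part_sub: "T \<in> partition_rel V n Ss R \<Longrightarrow> T \<subseteq> R \<and> T \<noteq> {}"
proof (induction Ss arbitrary: R)
  case Nil then show ?case by (auto split: if_splits)
next
  case (Cons U Us)
  then obtain i where "T \<in> partition_rel V n Us (part_i V R U i)" by auto
  with Cons.IH show ?case unfolding part_i_def by blast
qed

lemma deg_ext: "S \<subseteq> extensional V \<Longrightarrow> deg_val V S U u = card {s\<in>S. restrict s U = u}"
proof -
  assume S: "S \<subseteq> extensional V"
  have "(\<lambda>t. restrict t V) ` {s\<in>S. restrict s U = u} = {s\<in>S. restrict s U = u}"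
  proof (rule set_eqI)
    fix x show "x \<in> (\<lambda>t. restrict t V) ` {s\<in>S. restrict s U = u} \<longleftrightarrow> x \<in> {s\<in>S. restrict s U = u}"
      using S by (auto simp: extensional_restrict image_iff subset_iff)
  qed
  then show ?thesis unfolding deg_val_def deg_at_def by simp
qed

lemma const_deg: "(\<forall>t\<in>R. deg_val V R U (restrict t U) = c) \<Longrightarrow> part_i V R U i = R \<or> part_i V R U i = {}"
  unfolding part_i_def by (cases "2 ^ (i - 1) \<le> c \<and> c \<le> 2 ^ i") auto

lemma special: assumes "R \<subseteq> extensional V" "U = {} \<or> U = V"
  shows "part_i V R U i = R \<or> part_i V R U i = {}"
  using assms(2)
proof
  assume U: "U = {}"
  have "\<forall>t\<in>R. deg_val V R U (restrict t U) = deg_val V R U (\<lambda>x. undefined)"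
    using U by (simp add: restrict_def)
  then show ?thesis by (rule const_deg)
next
  assume U: "U = V"
  have "\<forall>t\<in>R. deg_val V R U (restrict t U) = 1"
  proof
    fix t assume t: "t \<in> R"
    have "{s\<in>R. restrict s V = restrict t V} = {t}"
      using t assms(1) by (auto simp: subset_iff extensional_restrict)
    then show "deg_val V R U (restrict t U) = 1" using assms(1) U by (simp add: deg_ext)
  qed
  then show ?thesis by (rule const_deg)
qed

lemma special_union: assumes "R \<subseteq> extensional V" "U = {} \<or> U = V"
  shows "(\<Union>i\<in>I. partition_rel V n Us (part_i V R U i)) \<subseteq> partition_rel V n Us R"
  using special[OF assms] part_empty by (metis (no_types, lifting) UN_least empty_subsetI order_refl)

lemma card_le2: assumes "finite J" "\<forall>i\<in>J. \<forall>j\<in>J. i \<le> j + (1::nat)" shows "card J \<le> 2"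
proof (cases "J = {}")
  case True then show ?thesis by simp
next
  case False
  define m where "m = Min J"
  have "J \<subseteq> {m, m+1}"
  proof
    fix i assume i: "i \<in> J"
    have "m \<le> i" using i assms(1) m_def by simp
    moreover have "m \<in> J" using False assms(1) m_def by simp
    moreover have "i \<le> m + 1" using assms(2) i \<open>m \<in> J\<close> by blast
    ultimately show "i \<in> {m, m+1}" by auto
  qed
  then have "card J \<le> card {m, m+1}" by (intro card_mono) auto
  also have "\<dots> = 2" by simp
  finally show ?thesis .
qed

lemma count2: "R \<subseteq> extensional V \<Longrightarrow>
  card {T \<in> partition_rel V n Ss R. t \<in> T} \<le> 2 ^ length (filter (\<lambda>U. U \<noteq> {} \<and> U \<noteq> V) Ss)"
proof (induction Ss arbitrary: R)
  case Nil
  have "{T \<in> partition_rel V n [] R. t \<in> T} \<subseteq> {R}" by auto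
  then have "card {T \<in> partition_rel V n [] R. t \<in> T} \<le> card {R}" by (intro card_mono) auto
  then have "card {T \<in> partition_rel V n [] R. t \<in> T} \<le> 1" by simp
  then show ?case by simp
next
  case (Cons U Us)
  define c where "c = nat \<lceil>log 2 (real n)\<rceil>"
  define l where "l = length (filter (\<lambda>U. U \<noteq> {} \<and> U \<noteq> V) Us)"
  have sub: "part_i V R U i \<subseteq> extensional V" for i using Cons.prems unfolding part_i_def by blast
  show ?case
  proof (cases "U = {} \<or> U = V")
    case True
    have su: "(\<Union>i\<in>{1..nat \<lceil>log 2 (real n)\<rceil>}. partition_rel V n Us (part_i V R U i)) \<subseteq> partition_rel V n Us R"
      by (rule special_union[OF Cons.prems True])
    have "{T \<in> partition_rel V n (U#Us) R. t \<in> T} \<subseteq> {T \<in> partition_rel V n Us R. t \<in> T}"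
      using su by auto
    then have "card {T \<in> partition_rel V n (U#Us) R. t \<in> T} \<le> card {T \<in> partition_rel V n Us R. t \<in> T}"
      by (simp add: card_mono part_fin)
    also have "\<dots> \<le> 2 ^ l" using Cons.IH[OF Cons.prems] unfolding l_def .
    finally show ?thesis using True unfolding l_def by auto
  next
    case False
    define J where "J = {i\<in>{1..c}. t \<in> part_i V R U i}"
    have "{T \<in> partition_rel V n (U#Us) R. t \<in> T} \<subseteq> (\<Union>i\<in>J. {T \<in> partition_rel V n Us (part_i V R U i). t \<in> T})"
    proof
      fix T assume "T \<in> {T \<in> partition_rel V n (U#Us) R. t \<in> T}"
      then obtain i where i: "i \<in> {1..c}" "T \<in> partition_rel V n Us (part_i V R U i)" and tT: "t \<in> T"
        unfolding c_def by auto
      have "t \<in> part_i V R U i" using part_sub[OF i(2)] tT by blast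
      then show "T \<in> (\<Union>i\<in>J. {T \<in> partition_rel V n Us (part_i V R U i). t \<in> T})"
        using i tT unfolding J_def by blast
    qed
    then have "card {T \<in> partition_rel V n (U#Us) R. t \<in> T} \<le> card (\<Union>i\<in>J. {T \<in> partition_rel V n Us (part_i V R U i). t \<in> T})"
      by (intro card_mono) (auto simp: J_def part_fin)
    also have "\<dots> \<le> (\<Sum>i\<in>J. card {T \<in> partition_rel V n Us (part_i V R U i). t \<in> T})"
      by (rule card_UN_le) (simp add: J_def)
    also have "\<dots> \<le> (\<Sum>i\<in>J. 2 ^ l)"
      by (rule sum_mono) (use Cons.IH[OF sub] in \<open>simp add: l_def\<close>)
    also have "\<dots> = card J * 2 ^ l" by simp
    also have "\<dots> \<le> 2 * 2 ^ l"
    proof (rule mult_right_mono)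
      show "card J \<le> 2"
      proof (rule card_le2)
        show "finite J" by (simp add: J_def)
        show "\<forall>i\<in>J. \<forall>j\<in>J. i \<le> j + 1"
        proof (intro ballI)
          fix i j assume "i \<in> J" "j \<in> J"
          then have "2^(i-1) \<le> deg_val V R U (restrict t U)" "deg_val V R U (restrict t U) \<le> (2::nat)^j"
            unfolding J_def part_i_def by auto
          then have "(2::nat)^(i-1) \<le> 2^j" by linarith
          then have "i - 1 \<le> j" by (rule power_le_imp_le_exp[rotated]) simp
          then show "i \<le> j + 1" by simp
        qed
      qed
    qed simp
    finally show ?thesis using False unfolding l_def by simp
  qed
qed

lemma count1: "R \<subseteq> extensional V \<Longrightarrow>
  card (partition_rel V n Ss R) \<le> nat \<lceil>log 2 (real n)\<rceil> ^ length (filter (\<lambda>U. U \<noteq> {} \<and> U \<noteq> V) Ss)"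
proof (induction Ss arbitrary: R)
  case Nil then show ?case by simp
next
  case (Cons U Us)
  define c where "c = nat \<lceil>log 2 (real n)\<rceil>"
  define l where "l = length (filter (\<lambda>U. U \<noteq> {} \<and> U \<noteq> V) Us)"
  have sub: "part_i V R U i \<subseteq> extensional V" for i using Cons.prems unfolding part_i_def by blast
  show ?case
  proof (cases "U = {} \<or> U = V")
    case True
    have "card (partition_rel V n (U#Us) R) \<le> card (partition_rel V n Us R)"
      using special_union[OF Cons.prems True] by (simp add: card_mono part_fin)
    also have "\<dots> \<le> c ^ l" using Cons.IH[OF Cons.prems] unfolding c_def l_def .
    finally show ?thesis using True unfolding c_def l_def by auto
  next
    case False
    have "card (partition_rel V n (U#Us) R) \<le> (\<Sum>i\<in>{1..c}. card (partition_rel V n Us (part_i V R U i)))"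
      unfolding c_def by (simp add: card_UN_le)
    also have "\<dots> \<le> (\<Sum>i\<in>{1..c}. c ^ l)"
      by (rule sum_mono) (use Cons.IH[OF sub] in \<open>simp add: c_def l_def\<close>)
    also have "\<dots> = c ^ Suc l" by simp
    finally show ?thesis using False unfolding c_def l_def by simp
  qed
qed


lemma double_count:
  assumes "finite R" "finite P" "\<forall>T\<in>P. T \<subseteq> R \<and> T \<noteq> {}" "\<forall>t\<in>R. card {T\<in>P. t \<in> T} \<le> B"
  shows "card P \<le> card R * B"
proof -
  have fT: "finite T" if "T \<in> P" for T using assms(1,3) that finite_subset by blast
  have "card P = (\<Sum>T\<in>P. 1)" by simp
  also have "\<dots> \<le> (\<Sum>T\<in>P. card T)"
    by (rule sum_mono) (use assms(3) fT in \<open>auto simp: Suc_le_eq card_gt_0_iff\<close>)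
  also have "\<dots> = (\<Sum>T\<in>P. \<Sum>t\<in>R. if t \<in> T then 1 else 0)"
  proof (rule sum.cong)
    fix T assume T: "T \<in> P"
    have "(\<Sum>t\<in>R. if t \<in> T then 1 else 0) = (\<Sum>t\<in>{t\<in>R. t \<in> T}. 1::nat)"
      using assms(1) by (rule sum.inter_filter[symmetric])
    also have "{t\<in>R. t \<in> T} = T" using assms(3) T by blast
    finally show "card T = (\<Sum>t\<in>R. if t \<in> T then 1 else 0)" by simp
  qed simp
  also have "\<dots> = (\<Sum>t\<in>R. \<Sum>T\<in>P. if t \<in> T then 1 else 0)" by (rule sum.swap)
  also have "\<dots> = (\<Sum>t\<in>R. card {T\<in>P. t \<in> T})"
  proof (rule sum.cong)
    fix t assume "t \<in> R"
    have "(\<Sum>T\<in>P. if t \<in> T then 1 else 0) = (\<Sum>T\<in>{T\<in>P. t \<in> T}. 1::nat)"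
      using assms(2) by (rule sum.inter_filter[symmetric])
    then show "(\<Sum>T\<in>P. if t \<in> T then 1 else 0) = card {T\<in>P. t \<in> T}" by simp
  qed simp
  also have "\<dots> \<le> (\<Sum>t\<in>R. B)" by (rule sum_mono) (use assms(4) in auto)
  also have "\<dots> = card R * B" by simp
  finally show ?thesis .
qed

lemma inv:
  "T \<in> partition_rel V n Ss R \<Longrightarrow> distinct Ss \<Longrightarrow>
   \<exists>f lv. (\<forall>U\<in>set Ss. T \<subseteq> f U \<and> f U \<subseteq> R \<and> (1::nat) \<le> lv U \<and>
        (\<forall>t\<in>T. lv U \<le> deg_val V (f U) U (restrict t U) \<and> deg_val V (f U) U (restrict t U) \<le> 2 * lv U))
     \<and> sorted_wrt (\<lambda>U W. f W \<subseteq> f U) Ss"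
proof (induction Ss arbitrary: R)
  case Nil
  show ?case by (rule exI[of _ "\<lambda>_. R"]) simp
next
  case (Cons U Us)
  from Cons.prems(1) obtain i where i: "1 \<le> i" and Ti: "T \<in> partition_rel V n Us (part_i V R U i)"
    by auto
  have dU: "U \<notin> set Us" "distinct Us" using Cons.prems(2) by auto
  from Cons.IH[OF Ti dU(2)] obtain f lv where
    H: "\<forall>W\<in>set Us. T \<subseteq> f W \<and> f W \<subseteq> part_i V R U i \<and> (1::nat) \<le> lv W \<and>
        (\<forall>t\<in>T. lv W \<le> deg_val V (f W) W (restrict t W) \<and> deg_val V (f W) W (restrict t W) \<le> 2 * lv W)"
    and S: "sorted_wrt (\<lambda>U W. f W \<subseteq> f U) Us" by blast
  have TR: "T \<subseteq> part_i V R U i" using part_sub[OF Ti] by blast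
  have pR: "part_i V R U i \<subseteq> R" unfolding part_i_def by blast
  define f' where "f' = f(U := R)"
  define lv' where "lv' = lv(U := (2::nat)^(i-1))"
  have A: "\<forall>W\<in>set (U#Us). T \<subseteq> f' W \<and> f' W \<subseteq> R \<and> (1::nat) \<le> lv' W \<and>
        (\<forall>t\<in>T. lv' W \<le> deg_val V (f' W) W (restrict t W) \<and> deg_val V (f' W) W (restrict t W) \<le> 2 * lv' W)"
  proof
    fix W assume W: "W \<in> set (U#Us)"
    show "T \<subseteq> f' W \<and> f' W \<subseteq> R \<and> (1::nat) \<le> lv' W \<and>
        (\<forall>t\<in>T. lv' W \<le> deg_val V (f' W) W (restrict t W) \<and> deg_val V (f' W) W (restrict t W) \<le> 2 * lv' W)"
    proof (cases "W = U")
      case True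
      have "\<forall>t\<in>T. 2^(i-1) \<le> deg_val V R U (restrict t U) \<and> deg_val V R U (restrict t U) \<le> 2 * 2^(i-1)"
      proof
        fix t assume "t \<in> T"
        then have "t \<in> part_i V R U i" using TR by blast
        moreover have "(2::nat) * 2^(i-1) = 2^i" using i by (metis Suc_diff_le diff_Suc_1 power_Suc)
        ultimately show "2^(i-1) \<le> deg_val V R U (restrict t U) \<and> deg_val V R U (restrict t U) \<le> 2 * 2^(i-1)"
          unfolding part_i_def by auto
      qed
      then show ?thesis using True TR pR unfolding f'_def lv'_def by auto
    next
      case False
      then have "W \<in> set Us" using W by simp
      then have hW: "T \<subseteq> f W \<and> f W \<subseteq> part_i V R U i \<and> (1::nat) \<le> lv W \<and>
        (\<forall>t\<in>T. lv W \<le> deg_val V (f W) W (restrict t W) \<and> deg_val V (f W) W (restrict t W) \<le> 2 * lv W)"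
        using H by blast
      have e: "f' W = f W" "lv' W = lv W" using False unfolding f'_def lv'_def by auto
      show ?thesis unfolding e using hW pR by blast
    qed
  qed
  have B: "sorted_wrt (\<lambda>U W. f' W \<subseteq> f' U) (U#Us)"
  proof -
    have "\<forall>W\<in>set Us. f' W \<subseteq> f' U"
    proof
      fix W assume W: "W \<in> set Us"
      then have "f W \<subseteq> part_i V R U i" using H by blast
      moreover have "W \<noteq> U" using W dU by auto
      ultimately show "f' W \<subseteq> f' U" using pR unfolding f'_def by auto
    qed
    moreover have "sorted_wrt (\<lambda>U W. f' W \<subseteq> f' U) Us"
      by (rule sorted_wrt_mono_rel[OF _ S]) (use dU in \<open>auto simp: f'_def\<close>)
    ultimately show ?thesis by simp
  qed
  show ?case using A B by blast
qed

lemma order_lemma: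
  assumes "sorted_wrt (\<lambda>A B. card A \<le> card B) Ss" "sorted_wrt Q Ss"
    "X \<in> set Ss" "Y \<in> set Ss" "X \<subset> Y" "finite Y"
  shows "Q X Y"
proof -
  obtain i where i: "i < length Ss" "Ss ! i = X" using assms(3) by (auto simp: in_set_conv_nth)
  obtain j where j: "j < length Ss" "Ss ! j = Y" using assms(4) by (auto simp: in_set_conv_nth)
  have lt: "card X < card Y" using assms(5,6) by (rule psubset_card_mono[rotated])
  have "i \<noteq> j" using i j assms(5) by auto
  moreover have "\<not> j < i"
  proof
    assume "j < i"
    then have "card Y \<le> card X" using assms(1) i j by (auto simp: sorted_wrt_iff_nth_less)
    with lt show False by simp
  qed
  ultimately have "i < j" by simp
  then show ?thesis using assms(2) i j by (auto simp: sorted_wrt_iff_nth_less)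
qed


lemma key:
  assumes "T \<subseteq> F" "F \<subseteq> extensional V" "finite F" "X \<subseteq> Y" "t \<in> T"
    "\<forall>s\<in>T. l \<le> deg_val V F Y (restrict s Y)"
  shows "deg_at T Y X (restrict t X) * l \<le> card {u\<in>F. restrict u X = restrict t X}"
proof -
  define x where "x = restrict t X"
  define Ys where "Ys = (\<lambda>s. restrict s Y) ` {s\<in>T. restrict s X = x}"
  define G where "G y = {u\<in>F. restrict u Y = y}" for y
  have m: "deg_at T Y X x = card Ys" unfolding deg_at_def Ys_def ..
  have finT: "finite T" using assms(1,3) finite_subset by blast
  have fin: "finite Ys" unfolding Ys_def using finT by simp
  have lb: "l \<le> card (G y)" if y: "y \<in> Ys" for y
  proof -
    obtain s where s: "s \<in> T" "y = restrict s Y" using y unfolding Ys_def by blast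
    have "l \<le> deg_val V F Y y" using assms(6) s by simp
    also have "\<dots> = card (G y)" unfolding G_def by (rule deg_ext[OF assms(2)])
    finally show ?thesis .
  qed
  have "card Ys * l \<le> (\<Sum>y\<in>Ys. card (G y))"
    using sum_bounded_below[of Ys l "\<lambda>y. card (G y)"] lb by simp
  also have "\<dots> = card (\<Union>y\<in>Ys. G y)"
    by (rule card_UN_disjoint[symmetric]) (use fin assms(3) in \<open>auto simp: G_def\<close>)
  also have "\<dots> \<le> card {u\<in>F. restrict u X = x}"
  proof (rule card_mono)
    show "finite {u\<in>F. restrict u X = x}" using assms(3) by simp
    show "(\<Union>y\<in>Ys. G y) \<subseteq> {u\<in>F. restrict u X = x}"
    proof
      fix u assume "u \<in> (\<Union>y\<in>Ys. G y)"
      then obtain s where s: "s \<in> T" "restrict s X = x" "u \<in> F" "restrict u Y = restrict s Y"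
        unfolding Ys_def G_def by blast
      have YX: "Y \<inter> X = X" using assms(4) by blast
      have "restrict u X = restrict (restrict u Y) X" by (simp add: YX)
      also have "\<dots> = restrict (restrict s Y) X" using s(4) by simp
      also have "\<dots> = x" using s(2) by (simp add: YX)
      finally show "u \<in> {u\<in>F. restrict u X = x}" using s(3) by simp
    qed
  qed
  finally show ?thesis using m unfolding x_def by simp
qed

lemma degV: assumes "F \<subseteq> extensional V" "t \<in> F"
  shows "deg_val V F V (restrict t V) = 1"
proof -
  have "{s\<in>F. restrict s V = restrict t V} = {t}"
    using assms by (auto simp: subset_iff extensional_restrict)
  then show ?thesis using assms(1) by (simp add: deg_ext)
qed

lemma degXX: assumes "t \<in> T" shows "deg_at T Y Y (restrict t Y) = 1"
proof -
  have "(\<lambda>s. restrict s Y) ` {s\<in>T. restrict s Y = restrict t Y} = {restrict t Y}"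
    using assms by auto
  then show ?thesis unfolding deg_at_def by simp
qed

theorem lemma4p3:
  fixes V :: "'v set" and R :: "('v \<Rightarrow> 'a) set" and n :: nat and Ss :: "'v set list"
  assumes "finite V" and "finite R" and "R \<subseteq> extensional V" and "card R = n"
    and "set Ss = Pow V" and "distinct Ss"
    and "sorted_wrt (\<lambda>A B. card A \<le> card B) Ss"
  shows "real (card (partition_rel V n Ss R)) \<le> (log 2 (real n)) ^ card (Pow V) \<and>
         (\<forall>T \<in> partition_rel V n Ss R. \<exists>\<sigma>. constraint_set V \<sigma> \<and> satisfies T V \<sigma> \<and>
              \<sigma> {} = real n \<and> \<sigma> V = 1)"
proof (cases "n \<le> 1")
  case True
  have l0: "log 2 (real n) = 0"
  proof (cases "n = 0")
    case True then show ?thesis by (simp add: log_def)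
  next
    case False then have "n = 1" using \<open>n \<le> 1\<close> by simp
    then show ?thesis by simp
  qed
  have "{} \<in> set Ss" using assms(5) by simp
  then obtain U Us where Ss: "Ss = U # Us" by (cases Ss) auto
  have P: "partition_rel V n Ss R = {}" using Ss l0 by simp
  show ?thesis unfolding P l0 by simp
next
  case False
  then have n2: "2 \<le> n" by simp
  let ?P = "partition_rel V n Ss R"
  let ?Q = "\<lambda>U. U \<noteq> {} \<and> U \<noteq> V"
  let ?k = "card (Pow V)"
  have V0: "V \<noteq> {}"
  proof
    assume "V = {}"
    then have "R \<subseteq> {\<lambda>x. undefined}" using assms(3) by simp
    then have "R = {} \<or> R = {\<lambda>x. undefined}" by (rule subset_singletonD)
    then have "card R \<le> 1" by auto
    then show False using assms(4) n2 by simp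
  qed
  have len: "length (filter ?Q Ss) = ?k - 2"
  proof -
    have "length (filter ?Q Ss) = card (set (filter ?Q Ss))"
      using assms(6) by (metis distinct_card distinct_filter)
    also have "set (filter ?Q Ss) = Pow V - {{}, V}" using assms(5) by auto
    also have "card (Pow V - {{}, V}) = ?k - card {{}, V}"
      using assms(1) by (intro card_Diff_subset) auto
    also have "card {{}, V} = 2" using V0 by simp
    finally show ?thesis .
  qed
  have kc: "?k = 2 \<or> ?k = 4 \<or> 8 \<le> ?k"
  proof -
    have cV: "card V \<ge> 1" using V0 assms(1) by (simp add: Suc_le_eq card_gt_0_iff)
    have kk: "?k = 2 ^ card V" using assms(1) by (simp add: card_Pow)
    show ?thesis
    proof (cases "card V \<le> 2")
      case True
      then have "card V = 1 \<or> card V = 2" using cV by auto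
      then show ?thesis using kk by auto
    next
      case False
      then have "(2::nat)^3 \<le> 2^card V" by (intro power_increasing) auto
      then show ?thesis using kk by simp
    qed
  qed
  have b1: "card ?P \<le> nat \<lceil>log 2 (real n)\<rceil> ^ (?k - 2)"
    using count1[OF assms(3), of n Ss] len by simp
  have b2: "card ?P \<le> n * 2 ^ (?k - 2)"
  proof -
    have "card ?P \<le> card R * 2 ^ (?k - 2)"
    proof (rule double_count)
      show "finite R" by (rule assms(2))
      show "finite ?P" by (rule part_fin)
      show "\<forall>T\<in>?P. T \<subseteq> R \<and> T \<noteq> {}" using part_sub by blast
      show "\<forall>t\<in>R. card {T \<in> ?P. t \<in> T} \<le> 2 ^ (?k - 2)"
        using count2[OF assms(3), of n Ss] len by simp
    qed
    then show ?thesis using assms(4) by simp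
  qed
  have b3: "card ?P \<le> 2 ^ n"
  proof -
    have "?P \<subseteq> Pow R" using part_sub by blast
    then have "card ?P \<le> card (Pow R)" using assms(2) by (intro card_mono) auto
    then show ?thesis using assms(2,4) by (simp add: card_Pow)
  qed
  have part1: "real (card ?P) \<le> (log 2 (real n)) ^ ?k"
    by (rule arith_final[OF n2 kc b1 b2 b3])
  have part2: "\<exists>\<sigma>. constraint_set V \<sigma> \<and> satisfies T V \<sigma> \<and> \<sigma> {} = real n \<and> \<sigma> V = 1"
    if T: "T \<in> ?P" for T
  proof -
    obtain f lv where
      H: "\<forall>U\<in>set Ss. T \<subseteq> f U \<and> f U \<subseteq> R \<and> (1::nat) \<le> lv U \<and>
        (\<forall>t\<in>T. lv U \<le> deg_val V (f U) U (restrict t U) \<and> deg_val V (f U) U (restrict t U) \<le> 2 * lv U)"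
      and S: "sorted_wrt (\<lambda>U W. f W \<subseteq> f U) Ss"
      using inv[OF T assms(6)] by blast
    have TR: "T \<subseteq> R" "T \<noteq> {}" using part_sub[OF T] by auto
    then obtain t0 where t0: "t0 \<in> T" by blast
    have HU: "T \<subseteq> f U" "f U \<subseteq> R" "1 \<le> lv U"
      "\<forall>t\<in>T. lv U \<le> deg_val V (f U) U (restrict t U) \<and> deg_val V (f U) U (restrict t U) \<le> 2 * lv U"
      if "U \<subseteq> V" for U using H that assms(5) by auto
    have fext: "f U \<subseteq> extensional V" if "U \<subseteq> V" for U using HU(2)[OF that] assms(3) by blast
    have ffin: "finite (f U)" if "U \<subseteq> V" for U using HU(2)[OF that] assms(2) finite_subset by blast
    have lvV: "lv V = 1"
    proof -
      have "deg_val V (f V) V (restrict t0 V) = 1"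
        using degV[OF fext[of V]] HU(1)[of V] t0 by blast
      then show ?thesis using HU(3,4)[of V] t0 by force
    qed
    define \<sigma> where "\<sigma> X = (if X = {} then real n else real (lv X))" for X
    have \<sigma>nn: "\<sigma> X \<ge> 0" for X unfolding \<sigma>_def by simp
    have sat: "satisfies T V \<sigma>"
      unfolding satisfies_def
    proof (intro allI impI)
      fix X Y assume XY: "X \<subseteq> Y \<and> Y \<subseteq> V"
      define Sd where "Sd = {deg_at T Y X (restrict t X) |t. t \<in> T} \<union> {0}"
      have finT: "finite T" using TR(1) assms(2) finite_subset by blast
      have finS: "finite Sd" unfolding Sd_def using finT by simp
      have "deg T Y X \<in> Sd" unfolding deg_def Sd_def[symmetric] using finS by (intro Max_in) (auto simp: Sd_def)
      then consider "deg T Y X = 0" | t where "t \<in> T" "deg T Y X = deg_at T Y X (restrict t X)"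
        unfolding Sd_def by auto
      then show "real (deg T Y X) * \<sigma> Y \<le> 2 * \<sigma> X"
      proof cases
        case 1 then show ?thesis using \<sigma>nn by simp
      next
        case (2 t)
        show ?thesis
        proof (cases "X = Y")
          case True
          then show ?thesis using 2 degXX[OF 2(1), of Y] \<sigma>nn[of Y] by simp
        next
          case False
          have Y0: "Y \<noteq> {}" using False XY by auto
          have k: "deg_at T Y X (restrict t X) * lv Y \<le> card {u\<in>f Y. restrict u X = restrict t X}"
            using key[OF HU(1)[of Y] fext[of Y] ffin[of Y]] XY 2 HU(4)[of Y] by blast
          show ?thesis
          proof (cases "X = {}")
            case True
            have "card {u\<in>f Y. restrict u X = restrict t X} \<le> card (f Y)"
              using ffin[of Y] XY by (intro card_mono) auto
            also have "\<dots> \<le> card R" using HU(2)[of Y] XY assms(2) by (intro card_mono) auto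
            finally have "deg T Y X * lv Y \<le> n" using k 2 assms(4) by simp
            then have "real (deg T Y X) * real (lv Y) \<le> real n" by (metis of_nat_le_iff of_nat_mult)
            then show ?thesis using True Y0 unfolding \<sigma>_def by simp
          next
            case X0: False
            have XinS: "X \<in> set Ss" "Y \<in> set Ss" using XY assms(5) by auto
            have fYX: "f Y \<subseteq> f X"
              using order_lemma[where Q="\<lambda>U W. f W \<subseteq> f U", OF assms(7) S XinS] False XY
                finite_subset[OF _ assms(1)] by blast
            have "card {u\<in>f Y. restrict u X = restrict t X} \<le> card {u\<in>f X. restrict u X = restrict t X}"
              using ffin[of X] XY fYX by (intro card_mono) auto
            also have "\<dots> = deg_val V (f X) X (restrict t X)"
              using XY by (intro deg_ext[OF fext, symmetric]) blast
            also have "\<dots> \<le> 2 * lv X" using HU(4)[of X] XY 2 by auto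
            finally have "deg T Y X * lv Y \<le> 2 * lv X" using k 2 by simp
            then have "real (deg T Y X) * real (lv Y) \<le> 2 * real (lv X)" by (metis of_nat_le_iff of_nat_mult of_nat_numeral)
            then show ?thesis using X0 Y0 unfolding \<sigma>_def by simp
          qed
        qed
      qed
    qed
    show ?thesis
    proof (intro exI conjI)
      show "constraint_set V \<sigma>" unfolding constraint_set_def using \<sigma>nn by simp
      show "satisfies T V \<sigma>" by (rule sat)
      show "\<sigma> {} = real n" unfolding \<sigma>_def by simp
      show "\<sigma> V = 1" unfolding \<sigma>_def using V0 lvV by simp
    qed
  qed
  show ?thesis using part1 part2 by blast
qed

end
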